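(* Let $\mathcal A,\mathcal B\subseteq\mathcal M_n(\mathbb C)$ be unital $*$-subalgebras with equivalent spectral lists, and let $S\in\mathcal M_n(\mathbb C)$. Then $$\mathcal U_n(\mathcal E_{\mathcal A}(\mathcal U_n(S)))=\mathcal U_n(\mathcal E_{\mathcal B}(\mathcal U_n(S)))\quad\text{and}\quad \mathcal U_n(\mathcal E_{\mathcal A}(\mathcal C_n(S)))=\mathcal U_n(\mathcal E_{\mathcal B}(\mathcal C_n(S))).$$
   Context: Every unital $*$-subalgebra $\mathcal A\subseteq\mathcal M_n(\mathbb C)$ is unitarily conjugate to one of the form $\bigoplus_{i=1}^m\mathcal M_{d(i)}(\mathbb C)\otimes1_{c(i)}$ with $\sum_i d(i)c(i)=n$ (where $\mathcal M_d(\mathbb C)\otimes 1_c$ is the set of block diagonal matrices with $c$ equal diagonal blocks in $\mathcal M_d(\mathbb C)$); the list $(d(i),c(i))_{i=1}^m$ is its spectral list, determined up to equivalence, where two lists $(d(i),c(i))_{i=1}^m$, $(d'(i),c'(i))_{i=1}^r$ are equivalent if $m=r$ and they differ by a permutation of indices. $\mathcal E_{\mathcal A}$ is the trace preserving conditional expectation onto $\mathcal A$, i.e. the orthogonal projection onto $\mathcal A$ with respect to $\langle X,Y\rangle=\mathrm{tr}(Y^*X)$. For $\mathcal X\subseteq\mathcal M_n(\mathbb C)$: $\mathcal U_n(\mathcal X)=\{U^*XU:X\in\mathcal X,U\text{ unitary}\}$, $\mathcal C_n(S)=\{V^*SV:\|V\|\le1\}$, $\mathcal E_{\mathcal A}(\mathcal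 X)=\{\mathcal E_{\mathcal A}(x):x\in\mathcal X\}$. *)

theory Defs
  imports "Jordan_Normal_Form.Matrix" "HOL-Library.Multiset"
begin

definition adj :: "complex mat \<Rightarrow> complex mat" where
  "adj A = mat (dim_col A) (dim_row A) (\<lambda>(i,j). cnj (A $$ (j,i)))"

definition unitary_mat :: "nat \<Rightarrow> complex mat \<Rightarrow> bool" where
  "unitary_mat n U \<longleftrightarrow> U \<in> carrier_mat n n \<and> adj U * U = 1\<^sub>m n \<and> U * adj U = 1\<^sub>m n"

definition unital_star_subalg :: "nat \<Rightarrow> complex mat set \<Rightarrow> bool" where
  "unital_star_subalg n \<A> \<longleftrightarrow> \<A> \<subseteq> carrier_mat n n \<and> 1\<^sub>m n \<in> \<A> \<and> 0\<^sub>m n n \<in> \<A>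
     \<and> (\<forall>X\<in>\<A>. \<forall>Y\<in>\<A>. X + Y \<in> \<A> \<and> X * Y \<in> \<A>)
     \<and> (\<forall>c. \<forall>X\<in>\<A>. c \<cdot>\<^sub>m X \<in> \<A>)
     \<and> (\<forall>X\<in>\<A>. adj X \<in> \<A>)"

text \<open>The standard algebra  (+)_i M_{d(i)}(C) \<otimes> 1_{c(i)}  for a list of pairs (d(i),c(i)):
  block diagonal matrices where block X_i in M_{d(i)} is repeated c(i) times.\<close>
definition std_alg :: "(nat \<times> nat) list \<Rightarrow> complex mat set" where
  "std_alg L = {diag_block_mat (concat (map (\<lambda>(X,(d,c)). replicate c X) (zip Xs L))) | Xs.
       length Xs = length L \<and> (\<forall>i<length L. Xs ! i \<in> carrier_mat (fst (L ! i)) (fst (L ! i)))}"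

definition spectral_list :: "nat \<Rightarrow> complex mat set \<Rightarrow> (nat \<times> nat) list \<Rightarrow> bool" where
  "spectral_list n \<A> L \<longleftrightarrow> (\<forall>(d,c)\<in>set L. d \<ge> 1 \<and> c \<ge> 1)
     \<and> (\<Sum>(d,c)\<leftarrow>L. d * c) = n
     \<and> (\<exists>U. unitary_mat n U \<and> {adj U * X * U | X. X \<in> \<A>} = std_alg L)"

definition equiv_lists :: "(nat \<times> nat) list \<Rightarrow> (nat \<times> nat) list \<Rightarrow> bool" where
  "equiv_lists L L' \<longleftrightarrow> length L = length L' \<and> mset L = mset L'"

definition mtrace :: "complex mat \<Rightarrow> complex" where
  "mtrace A = (\<Sum>i<dim_row A. A $$ (i,i))"

text \<open>Trace preserving conditional expectation: orthogonal projection onto \<A> w.r.t.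
  <X,Y> = tr(Y^* X).\<close>
definition cond_exp :: "complex mat set \<Rightarrow> complex mat \<Rightarrow> complex mat" where
  "cond_exp \<A> X = (THE Y. Y \<in> \<A> \<and> (\<forall>Z\<in>\<A>. mtrace (adj Z * (X - Y)) = 0))"

definition unitary_orbit :: "nat \<Rightarrow> complex mat set \<Rightarrow> complex mat set" where
  "unitary_orbit n \<X> = {adj U * X * U | X U. X \<in> \<X> \<and> unitary_mat n U}"

definition vnorm2 :: "complex vec \<Rightarrow> real" where
  "vnorm2 x = (\<Sum>i<dim_vec x. (cmod (x $ i))\<^sup>2)"

definition contraction :: "nat \<Rightarrow> complex mat \<Rightarrow> bool" where
  "contraction n V \<longleftrightarrow> V \<in> carrier_mat n n \<and> (\<forall>x\<in>carrier_vec n. vnorm2 (V *\<^sub>v x) \<le> vnorm2 x)"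

definition compressions :: "nat \<Rightarrow> complex mat \<Rightarrow> complex mat set" where
  "compressions n S = {adj V * S * V | V. contraction n V}"

end

theory Submission imports Defs begin

definition ip :: "'a set \<Rightarrow> ('a \<Rightarrow> complex) \<Rightarrow> ('a \<Rightarrow> complex) \<Rightarrow> complex" where
  "ip I f g = (\<Sum>i\<in>I. f i * cnj (g i))"

lemma ip_diff_left: "ip I (\<lambda>i. f i - g i) h = ip I f h - ip I g h"
  unfolding ip_def by (simp add: algebra_simps sum_subtractf)
lemma ip_add_left: "ip I (\<lambda>i. f i + g i) h = ip I f h + ip I g h"
  unfolding ip_def by (simp add: algebra_simps sum.distrib)
lemma ip_scale_left: "ip I (\<lambda>i. c * f i) h = c * ip I f h"
  unfolding ip_def by (simp add: algebra_simps sum_distrib_left)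
lemma ip_add_right: "ip I f (\<lambda>i. g i + h i) = ip I f g + ip I f h"
  unfolding ip_def by (simp add: algebra_simps sum.distrib)
lemma ip_scale_right: "ip I f (\<lambda>i. c * g i) = cnj c * ip I f g"
  unfolding ip_def by (simp add: algebra_simps sum_distrib_left)
lemma ip_self: "ip I f f = complex_of_real (\<Sum>i\<in>I. (cmod (f i))\<^sup>2)"
  unfolding ip_def of_real_sum by (rule sum.cong[OF refl]) (metis complex_norm_square)

lemma ip_insert: "finite I \<Longrightarrow> a \<notin> I \<Longrightarrow> ip (insert a I) f g = f a * cnj (g a) + ip I f g"
  unfolding ip_def by simp

lemma proj_exists:
  fixes V :: "('a \<Rightarrow> complex) set"
  assumes "finite I" "(\<lambda>i. 0) \<in> V" "\<forall>u\<in>V. \<forall>v\<in>V. (\<lambda>i. u i + v i) \<in> V"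
    "\<forall>c. \<forall>v\<in>V. (\<lambda>i. c * v i) \<in> V"
  shows "\<exists>y\<in>V. \<forall>z\<in>V. ip I (\<lambda>i. x i - y i) z = 0"
  using assms
proof (induction I arbitrary: V x rule: finite_induct)
  case empty
  then show ?case unfolding ip_def by auto
next
  case (insert a F)
  have diffV: "(\<lambda>i. u i - v i) \<in> V" if "u \<in> V" "v \<in> V" for u v
  proof -
    have h: "(\<lambda>i. (-1) * v i) \<in> V" using insert.prems that by blast
    have "(\<lambda>i. u i + (\<lambda>i. (-1) * v i) i) \<in> V" by (rule insert.prems(2)[rule_format, OF that(1) h])
    moreover have "(\<lambda>i. u i + (\<lambda>i. (-1) * v i) i) = (\<lambda>i. u i - v i)" by simp
    ultimately show ?thesis by simp
  qed
  define V0 where "V0 = {v\<in>V. v a = 0}"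
  have V0: "(\<lambda>i. 0) \<in> V0" "\<forall>u\<in>V0. \<forall>v\<in>V0. (\<lambda>i. u i + v i) \<in> V0"
    "\<forall>c. \<forall>v\<in>V0. (\<lambda>i. c * v i) \<in> V0"
    using insert.prems unfolding V0_def by auto
  show ?case
  proof (cases "\<forall>v\<in>V. v a = 0")
    case True
    hence "V0 = V" unfolding V0_def by auto
    from insert.IH[OF V0, of x] obtain y where y: "y \<in> V0" "\<forall>z\<in>V0. ip F (\<lambda>i. x i - y i) z = 0" by blast
    show ?thesis
      using y True \<open>V0 = V\<close> by (intro bexI[of _ y]) (auto simp: ip_insert insert.hyps)
  next
    case False
    then obtain w where w: "w \<in> V" "w a \<noteq> 0" by auto
    from insert.IH[OF V0, of w] obtain y0 where y0: "y0 \<in> V0" "\<forall>z\<in>V0. ip F (\<lambda>i. w i - y0 i) z = 0" by blast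
    define w' where "w' = (\<lambda>i. w i - y0 i)"
    have w'V: "w' \<in> V" unfolding w'_def using diffV w y0 unfolding V0_def by auto
    have w'a: "w' a \<noteq> 0" using w y0 unfolding w'_def V0_def by auto
    have orth1: "ip (insert a F) w' z = 0" if "z \<in> V0" for z
      using y0 that unfolding w'_def V0_def by (auto simp: ip_insert insert.hyps)
    from insert.IH[OF V0, of x] obtain y1 where y1: "y1 \<in> V0" "\<forall>z\<in>V0. ip F (\<lambda>i. x i - y1 i) z = 0" by blast
    have orth2: "ip (insert a F) (\<lambda>i. x i - y1 i) z = 0" if "z \<in> V0" for z
      using y1 that unfolding V0_def by (auto simp: ip_insert insert.hyps)
    define N where "N = ip (insert a F) w' w'"
    have "(\<Sum>i\<in>insert a F. (cmod (w' i))\<^sup>2) \<ge> (cmod (w' a))\<^sup>2"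
      using insert.hyps by (simp add: sum_nonneg)
    moreover have "(cmod (w' a))\<^sup>2 > 0" using w'a by simp
    ultimately have "N \<noteq> 0" unfolding N_def ip_self by (smt (verit) of_real_eq_0_iff)
    define c where "c = ip (insert a F) (\<lambda>i. x i - y1 i) w' / N"
    define y where "y = (\<lambda>i. y1 i + c * w' i)"
    have yV: "y \<in> V" unfolding y_def using insert.prems(2,3) w'V y1 unfolding V0_def by auto
    have xy: "(\<lambda>i. x i - y i) = (\<lambda>i. (\<lambda>i. x i - y1 i) i - c * w' i)"
      unfolding y_def by (auto simp: algebra_simps)
    have e1: "ip (insert a F) (\<lambda>i. x i - y i) w' = 0"
      unfolding xy ip_diff_left ip_scale_left using \<open>N \<noteq> 0\<close> unfolding c_def N_def by (simp add: ip_diff_left)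
    have e2: "ip (insert a F) (\<lambda>i. x i - y i) z0 = 0" if "z0 \<in> V0" for z0
      unfolding xy ip_diff_left ip_scale_left using orth1[OF that] orth2[OF that] by (simp add: ip_diff_left)
    show ?thesis
    proof (intro bexI[OF _ yV] ballI)
      fix z assume z: "z \<in> V"
      define t where "t = z a / w' a"
      define z0 where "z0 = (\<lambda>i. z i - t * w' i)"
      have "z0 \<in> V" unfolding z0_def using diffV z insert.prems(3) w'V by auto
      moreover have "z0 a = 0" unfolding z0_def t_def using w'a by simp
      ultimately have z0: "z0 \<in> V0" unfolding V0_def by auto
      have "z = (\<lambda>i. z0 i + t * w' i)" unfolding z0_def by auto
      hence "ip (insert a F) (\<lambda>i. x i - y i) z
          = ip (insert a F) (\<lambda>i. x i - y i) z0 + cnj t * ip (insert a F) (\<lambda>i. x i - y i) w'"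
        by (metis ip_add_right ip_scale_right)
      thus "ip (insert a F) (\<lambda>i. x i - y i) z = 0" using e1 e2[OF z0] by simp
    qed
  qed
qed




lemma adj_dim[simp]: "dim_row (adj A) = dim_col A" "dim_col (adj A) = dim_row A"
  unfolding adj_def by auto
lemma adj_index[simp]: "i < dim_col A \<Longrightarrow> j < dim_row A \<Longrightarrow> adj A $$ (i,j) = cnj (A $$ (j,i))"
  unfolding adj_def by auto
lemma adj_carrier[simp]: "A \<in> carrier_mat m k \<Longrightarrow> adj A \<in> carrier_mat k m"
  unfolding carrier_mat_def by auto
lemma adj_adj[simp]: "adj (adj A) = A"
  by (rule eq_matI) auto
lemma adj_mult: assumes "A \<in> carrier_mat m k" "B \<in> carrier_mat k l"
  shows "adj (A * B) = adj B * adj A"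
proof (rule eq_matI)
  fix i j assume ij: "i < dim_row (adj B * adj A)" "j < dim_col (adj B * adj A)"
  thus "adj (A * B) $$ (i, j) = (adj B * adj A) $$ (i, j)"
    using assms by (auto simp: scalar_prod_def cnj_sum mult.commute intro!: sum.cong)
qed (use assms in auto)
lemma adj_one[simp]: "adj (1\<^sub>m n) = 1\<^sub>m n"
  by (rule eq_matI) auto
lemma adj_minus: "A \<in> carrier_mat m k \<Longrightarrow> B \<in> carrier_mat m k \<Longrightarrow> adj (A - B) = adj A - adj B"
  by (rule eq_matI) auto

lemma mtrace_comm: assumes "A \<in> carrier_mat m k" "B \<in> carrier_mat k m"
  shows "mtrace (A * B) = mtrace (B * A)"
proof -
  have "mtrace (A * B) = (\<Sum>i<m. \<Sum>t<k. A $$ (i,t) * B $$ (t,i))"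
    using assms unfolding mtrace_def by (auto simp: scalar_prod_def atLeast0LessThan intro!: sum.cong)
  also have "\<dots> = (\<Sum>t<k. \<Sum>i<m. B $$ (t,i) * A $$ (i,t))"
    by (subst sum.swap) (simp add: mult.commute)
  also have "\<dots> = mtrace (B * A)"
    using assms unfolding mtrace_def by (auto simp: scalar_prod_def atLeast0LessThan intro!: sum.cong)
  finally show ?thesis .
qed

definition vecf :: "nat \<Rightarrow> complex mat \<Rightarrow> nat \<times> nat \<Rightarrow> complex" where
  "vecf n M = (\<lambda>(i,j). if i < n \<and> j < n then M $$ (i,j) else 0)"

lemma mtrace_ip: assumes "M \<in> carrier_mat n n" "Z \<in> carrier_mat n n"
  shows "mtrace (adj Z * M) = ip ({..<n} \<times> {..<n}) (vecf n M) (vecf n Z)"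
proof -
  have "mtrace (adj Z * M) = (\<Sum>i<n. \<Sum>k<n. M $$ (k,i) * cnj (Z $$ (k,i)))"
    using assms unfolding mtrace_def by (auto simp: scalar_prod_def atLeast0LessThan mult.commute intro!: sum.cong)
  also have "\<dots> = (\<Sum>k<n. \<Sum>i<n. M $$ (k,i) * cnj (Z $$ (k,i)))"
    by (rule sum.swap)
  also have "\<dots> = ip ({..<n} \<times> {..<n}) (vecf n M) (vecf n Z)"
    unfolding ip_def vecf_def by (auto simp: sum.cartesian_product intro!: sum.cong)
  finally show ?thesis .
qed

lemma vecf_minus: "M \<in> carrier_mat n n \<Longrightarrow> N \<in> carrier_mat n n \<Longrightarrow> vecf n (M - N) = (\<lambda>i. vecf n M i - vecf n N i)"
  unfolding vecf_def by auto
lemma vecf_add: "M \<in> carrier_mat n n \<Longrightarrow> N \<in> carrier_mat n n \<Longrightarrow> vecf n (M + N) = (\<lambda>i. vecf n M i + vecf n N i)"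
  unfolding vecf_def by auto
lemma vecf_smult: "vecf n (c \<cdot>\<^sub>m M) = (\<lambda>i. c * vecf n M i)" if "M \<in> carrier_mat n n"
  using that unfolding vecf_def by auto
lemma vecf_zero: "vecf n (0\<^sub>m n n) = (\<lambda>i. 0)"
  unfolding vecf_def by auto
lemma vecf_inj: assumes c: "M \<in> carrier_mat n n" "N \<in> carrier_mat n n" and e: "vecf n M = vecf n N"
  shows "M = N"
proof (rule eq_matI)
  fix i j assume ij: "i < dim_row N" "j < dim_col N"
  have "vecf n M (i,j) = vecf n N (i,j)" using e by simp
  thus "M $$ (i, j) = N $$ (i, j)" using ij c unfolding vecf_def by auto
qed (use c in auto)

definition CE_prop :: "complex mat set \<Rightarrow> complex mat \<Rightarrow> complex mat \<Rightarrow> bool" where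
  "CE_prop A X Y \<longleftrightarrow> Y \<in> A \<and> (\<forall>Z\<in>A. mtrace (adj Z * (X - Y)) = 0)"

lemma CE_unique_exists:
  assumes A: "unital_star_subalg n A" and X: "X \<in> carrier_mat n n"
  shows "\<exists>!Y. CE_prop A X Y"
proof -
  have Ac: "A \<subseteq> carrier_mat n n" using A unfolding unital_star_subalg_def by auto
  define I where "I = {..<n} \<times> {..<n}"
  define V where "V = vecf n ` A"
  have "0\<^sub>m n n \<in> A" using A unfolding unital_star_subalg_def by auto
  hence "vecf n (0\<^sub>m n n) \<in> V" unfolding V_def by blast
  hence "(\<lambda>i. 0) \<in> V" by (simp add: vecf_zero)
  moreover have "\<forall>u\<in>V. \<forall>v\<in>V. (\<lambda>i. u i + v i) \<in> V"
  proof (intro ballI)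
    fix u v assume "u \<in> V" "v \<in> V"
    then obtain M N where "M \<in> A" "N \<in> A" "u = vecf n M" "v = vecf n N" unfolding V_def by auto
    moreover have "M + N \<in> A" using A \<open>M \<in> A\<close> \<open>N \<in> A\<close> unfolding unital_star_subalg_def by auto
    hence "vecf n (M + N) \<in> V" unfolding V_def by blast
    ultimately show "(\<lambda>i. u i + v i) \<in> V" using Ac by (simp add: vecf_add subsetD)
  qed
  moreover have "\<forall>c. \<forall>v\<in>V. (\<lambda>i. c * v i) \<in> V"
  proof (intro allI ballI)
    fix c v assume "v \<in> V"
    then obtain M where "M \<in> A" "v = vecf n M" unfolding V_def by auto
    moreover have "c \<cdot>\<^sub>m M \<in> A" using A \<open>M \<in> A\<close> unfolding unital_star_subalg_def by auto
    hence "vecf n (c \<cdot>\<^sub>m M) \<in> V" unfolding V_def by blast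
    ultimately show "(\<lambda>i. c * v i) \<in> V" using Ac by (simp add: vecf_smult subsetD)
  qed
  ultimately obtain y where y: "y \<in> V" "\<forall>z\<in>V. ip I (\<lambda>i. vecf n X i - y i) z = 0"
    using proj_exists[of I V "vecf n X"] unfolding I_def by auto
  then obtain Y where Y: "Y \<in> A" "y = vecf n Y" unfolding V_def by auto
  have ex: "CE_prop A X Y"
    unfolding CE_prop_def
  proof (intro conjI ballI)
    fix Z assume "Z \<in> A"
    thus "mtrace (adj Z * (X - Y)) = 0" using y Y Ac X unfolding V_def I_def
      by (subst mtrace_ip[of _ n]) (auto simp: vecf_minus minus_carrier_mat subsetD)
  qed (fact Y)
  moreover have "Y' = Y" if "CE_prop A X Y'" for Y'
  proof -
    have Y': "Y' \<in> A" "\<forall>Z\<in>A. mtrace (adj Z * (X - Y')) = 0" using that unfolding CE_prop_def by auto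
    have Y1: "Y \<in> A" "\<forall>Z\<in>A. mtrace (adj Z * (X - Y)) = 0" using ex unfolding CE_prop_def by auto
    have Ycar: "Y \<in> carrier_mat n n" "Y' \<in> carrier_mat n n" using Y1 Y' Ac by auto
    have "Y' + (-1) \<cdot>\<^sub>m Y \<in> A" using A Y1 Y' unfolding unital_star_subalg_def by auto
    moreover have "Y' + (-1) \<cdot>\<^sub>m Y = Y' - Y" using Ycar by (intro eq_matI) auto
    ultimately have D: "Y' - Y \<in> A" by simp
    define d where "d = vecf n (Y' - Y)"
    have "mtrace (adj (Y' - Y) * (X - Y)) - mtrace (adj (Y' - Y) * (X - Y')) = 0"
      using Y' Y1 D by simp
    hence "ip I (vecf n (X - Y)) d - ip I (vecf n (X - Y')) d = 0"
      unfolding d_def I_def using Ycar X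
      by (simp add: mtrace_ip[of "X - Y" n] mtrace_ip[of "X - Y'" n] minus_carrier_mat)
    hence "ip I (\<lambda>i. vecf n (X - Y) i - vecf n (X - Y') i) d = 0" by (simp add: ip_diff_left)
    moreover have "(\<lambda>i. vecf n (X - Y) i - vecf n (X - Y') i) = d"
      unfolding d_def using Ycar X by (auto simp: vecf_minus)
    ultimately have "ip I d d = 0" by simp
    hence "complex_of_real (\<Sum>i\<in>I. (cmod (d i))\<^sup>2) = 0" unfolding ip_self .
    hence "(\<Sum>i\<in>I. (cmod (d i))\<^sup>2) = 0" by (simp only: of_real_eq_0_iff)
    hence "\<forall>i\<in>I. (cmod (d i))\<^sup>2 = 0" unfolding I_def by (subst (asm) sum_nonneg_eq_0_iff) auto
    hence "\<forall>i\<in>I. d i = 0" by simp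
    hence "d = vecf n (0\<^sub>m n n)" unfolding d_def vecf_def I_def by auto
    hence "Y' - Y = 0\<^sub>m n n" unfolding d_def using Ycar by (intro vecf_inj) auto
    show "Y' = Y"
    proof (rule eq_matI)
      fix i j assume ij: "i < dim_row Y" "j < dim_col Y"
      have "(Y' - Y) $$ (i,j) = 0" using \<open>Y' - Y = 0\<^sub>m n n\<close> ij Ycar by simp
      thus "Y' $$ (i, j) = Y $$ (i, j)" using ij Ycar by simp
    qed (use Ycar in auto)
  qed
  ultimately show ?thesis by blast
qed

lemma cond_exp_THE: "cond_exp A X = (THE Y. CE_prop A X Y)"
  unfolding cond_exp_def CE_prop_def by simp
lemma cond_exp_prop: "unital_star_subalg n A \<Longrightarrow> X \<in> carrier_mat n n \<Longrightarrow> CE_prop A X (cond_exp A X)"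
  unfolding cond_exp_THE by (rule theI') (rule CE_unique_exists)
lemma cond_exp_eq: "unital_star_subalg n A \<Longrightarrow> X \<in> carrier_mat n n \<Longrightarrow> CE_prop A X Y \<Longrightarrow> cond_exp A X = Y"
  using CE_unique_exists[of n A X] cond_exp_prop[of n A X] by blast


lemma mult_sq[simp]: "A \<in> carrier_mat n n \<Longrightarrow> B \<in> carrier_mat n n \<Longrightarrow> A * B \<in> carrier_mat n n"
  by auto
lemma minus_sq[simp]: "A \<in> carrier_mat n n \<Longrightarrow> B \<in> carrier_mat n n \<Longrightarrow> A - B \<in> carrier_mat n n"
  by (auto simp: minus_carrier_mat)

lemma unitary_carrier: "unitary_mat n W \<Longrightarrow> W \<in> carrier_mat n n"
  unfolding unitary_mat_def by auto

lemma WadjW_left: assumes "unitary_mat n W" "Q \<in> carrier_mat n k"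
  shows "W * (adj W * Q) = Q" "adj W * (W * Q) = Q"
proof -
  have W: "W \<in> carrier_mat n n" using assms unfolding unitary_mat_def by auto
  have "W * (adj W * Q) = (W * adj W) * Q" using W assms by (simp add: assoc_mult_mat[of _ n n _ n _ k])
  thus "W * (adj W * Q) = Q" using assms unfolding unitary_mat_def by simp
  have "adj W * (W * Q) = (adj W * W) * Q" using W assms by (simp add: assoc_mult_mat[of _ n n _ n _ k])
  thus "adj W * (W * Q) = Q" using assms unfolding unitary_mat_def by simp
qed

lemma WadjW_right: assumes "unitary_mat n W" "Q \<in> carrier_mat k n"
  shows "Q * W * adj W = Q" "Q * adj W * W = Q"
proof -
  have W: "W \<in> carrier_mat n n" using assms unfolding unitary_mat_def by auto
  have "Q * W * adj W = Q * (W * adj W)" using W assms by (simp add: assoc_mult_mat[of _ k n _ n _ n])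
  thus "Q * W * adj W = Q" using assms unfolding unitary_mat_def by simp
  have "Q * adj W * W = Q * (adj W * W)" using W assms by (simp add: assoc_mult_mat[of _ k n _ n _ n])
  thus "Q * adj W * W = Q" using assms unfolding unitary_mat_def by simp
qed

lemma unitary_adj: "unitary_mat n W \<Longrightarrow> unitary_mat n (adj W)"
  unfolding unitary_mat_def by auto

lemma unitary_mult: assumes "unitary_mat n V" "unitary_mat n W" shows "unitary_mat n (V * W)"
proof -
  have V: "V \<in> carrier_mat n n" and W: "W \<in> carrier_mat n n" using assms unitary_carrier by auto
  have a: "adj (V * W) = adj W * adj V" using V W by (simp add: adj_mult)
  have "adj W * adj V * (V * W) = adj W * (adj V * (V * W))" using V W by (simp add: assoc_mult_mat[of _ n n _ n _ n])
  also have "\<dots> = 1\<^sub>m n" using WadjW_left(2)[OF assms(1) W] assms(2) unfolding unitary_mat_def by simp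
  finally have 1: "adj (V * W) * (V * W) = 1\<^sub>m n" unfolding a .
  have "V * W * (adj W * adj V) = V * (W * (adj W * adj V))" using V W by (simp add: assoc_mult_mat[of _ n n _ n _ n])
  also have "\<dots> = 1\<^sub>m n" using WadjW_left(1)[OF assms(2), of "adj V" n] V assms(1) unfolding unitary_mat_def by simp
  finally have 2: "V * W * adj (V * W) = 1\<^sub>m n" unfolding a .
  show ?thesis using 1 2 V W unfolding unitary_mat_def by auto
qed

lemma conj_trace: assumes "unitary_mat n W" "M \<in> carrier_mat n n"
  shows "mtrace (adj W * M * W) = mtrace M"
proof -
  have W: "W \<in> carrier_mat n n" using assms unitary_carrier by auto
  have "mtrace (adj W * M * W) = mtrace (adj W * (M * W))" using W assms by (simp add: assoc_mult_mat[of _ n n _ n _ n])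
  also have "\<dots> = mtrace ((M * W) * adj W)" using W assms by (intro mtrace_comm[of _ n n]) auto
  also have "\<dots> = mtrace M" using WadjW_right(1)[OF assms(1) assms(2)] by simp
  finally show ?thesis .
qed

lemma conj_mult: assumes "unitary_mat n W" "A \<in> carrier_mat n n" "B \<in> carrier_mat n n"
  shows "adj W * A * W * (adj W * B * W) = adj W * (A * B) * W"
proof -
  have W: "W \<in> carrier_mat n n" using assms unitary_carrier by auto
  have "adj W * A * W * (adj W * B * W) = adj W * A * (W * (adj W * (B * W)))"
    using W assms by (simp add: assoc_mult_mat[of _ n n _ n _ n])
  also have "\<dots> = adj W * A * (B * W)" using WadjW_left(1)[OF assms(1), of "B * W" n] W assms by simp
  also have "\<dots> = adj W * (A * B) * W" using W assms by (simp add: assoc_mult_mat[of _ n n _ n _ n])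
  finally show ?thesis .
qed

lemma conj_minus: assumes "W \<in> carrier_mat n n" "A \<in> carrier_mat n n" "B \<in> carrier_mat n n"
  shows "adj W * A * W - adj W * B * W = adj W * (A - B) * W"
  using assms by (simp add: mult_minus_distrib_mat[of _ n n] minus_mult_distrib_mat[of _ n n] minus_carrier_mat)

lemma conj_adj: assumes "W \<in> carrier_mat n n" "Z \<in> carrier_mat n n"
  shows "adj (adj W * Z * W) = adj W * adj Z * W"
  using assms by (simp add: adj_mult[of _ n n _ n] assoc_mult_mat[of _ n n _ n _ n])

lemma conj_back: assumes "unitary_mat n W" "X \<in> carrier_mat n n"
  shows "adj W * (W * X * adj W) * W = X"
proof -
  have W: "W \<in> carrier_mat n n" using assms unitary_carrier by auto
  have "adj W * (W * X * adj W) * W = adj W * (W * (X * adj W * W))"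
    using W assms by (simp add: assoc_mult_mat[of _ n n _ n _ n])
  also have "\<dots> = X" using WadjW_left(2)[OF assms(1)] WadjW_right(2)[OF assms] W assms by simp
  finally show ?thesis .
qed

lemma cond_exp_conj:
  assumes A: "unital_star_subalg n A" and B: "unital_star_subalg n B" and W: "unitary_mat n W"
    and BA: "B = {adj W * Z * W | Z. Z \<in> A}" and X: "X \<in> carrier_mat n n"
  shows "cond_exp B X = adj W * cond_exp A (W * X * adj W) * W"
proof -
  have Wc: "W \<in> carrier_mat n n" using W unitary_carrier by auto
  have Ac: "A \<subseteq> carrier_mat n n" using A unfolding unital_star_subalg_def by auto
  define X' where "X' = W * X * adj W"
  have X'c: "X' \<in> carrier_mat n n" unfolding X'_def using Wc X by auto
  define Y where "Y = cond_exp A X'"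
  have Y: "Y \<in> A" "\<forall>Z\<in>A. mtrace (adj Z * (X' - Y)) = 0"
    using cond_exp_prop[OF A X'c] unfolding Y_def CE_prop_def by auto
  have Yc: "Y \<in> carrier_mat n n" using Y Ac by auto
  have "CE_prop B X (adj W * Y * W)"
    unfolding CE_prop_def
  proof (intro conjI ballI)
    show "adj W * Y * W \<in> B" using Y BA by auto
    fix Z' assume "Z' \<in> B"
    then obtain Z where Z: "Z \<in> A" "Z' = adj W * Z * W" using BA by auto
    have Zc: "Z \<in> carrier_mat n n" using Z Ac by auto
    have "X - adj W * Y * W = adj W * X' * W - adj W * Y * W"
      unfolding X'_def using conj_back[OF W X] by simp
    also have "\<dots> = adj W * (X' - Y) * W" using conj_minus[OF Wc X'c Yc] .
    finally have e1: "X - adj W * Y * W = adj W * (X' - Y) * W" .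
    have "adj Z' * (X - adj W * Y * W) = adj W * adj Z * W * (adj W * (X' - Y) * W)"
      unfolding e1 Z(2) conj_adj[OF Wc Zc] ..
    also have "\<dots> = adj W * (adj Z * (X' - Y)) * W"
      by (rule conj_mult[OF W]) (use Zc X'c Yc in \<open>auto simp: minus_carrier_mat\<close>)
    finally have "mtrace (adj Z' * (X - adj W * Y * W)) = mtrace (adj Z * (X' - Y))"
      using conj_trace[OF W, of "adj Z * (X' - Y)"] Zc X'c Yc by (simp add: minus_carrier_mat)
    thus "mtrace (adj Z' * (X - adj W * Y * W)) = 0" using Y Z by simp
  qed
  from cond_exp_eq[OF B X this] show ?thesis unfolding Y_def X'_def .
qed


definition colm :: "complex vec \<Rightarrow> complex mat" where
  "colm x = mat (dim_vec x) 1 (\<lambda>(i,j). x $ i)"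

lemma colm_carrier: "x \<in> carrier_vec n \<Longrightarrow> colm x \<in> carrier_mat n 1"
  unfolding colm_def by auto

lemma colm_mult: assumes "U \<in> carrier_mat n n" "x \<in> carrier_vec n"
  shows "U * colm x = colm (U *\<^sub>v x)"
proof (rule eq_matI)
  fix i j assume "i < dim_row (colm (U *\<^sub>v x))" "j < dim_col (colm (U *\<^sub>v x))"
  thus "(U * colm x) $$ (i, j) = colm (U *\<^sub>v x) $$ (i, j)"
    using assms unfolding colm_def by (auto simp: scalar_prod_def)
qed (use assms in \<open>auto simp: colm_def\<close>)

lemma sqcnj: "z * cnj z = (complex_of_real (cmod z))^2"
  by (metis complex_norm_square of_real_power)

lemma colm_norm: "(adj (colm x) * colm x) $$ (0,0) = complex_of_real (vnorm2 x)"
  unfolding colm_def vnorm2_def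
  by (auto simp: scalar_prod_def of_real_sum sqcnj atLeast0LessThan mult.commute intro!: sum.cong)

lemma unitary_vnorm2: assumes "unitary_mat n U" "x \<in> carrier_vec n"
  shows "vnorm2 (U *\<^sub>v x) = vnorm2 x"
proof -
  have Uc: "U \<in> carrier_mat n n" using assms unitary_carrier by auto
  have xc: "colm x \<in> carrier_mat n 1" using assms colm_carrier by auto
  have "adj (colm (U *\<^sub>v x)) * colm (U *\<^sub>v x) = adj (colm x) * adj U * (U * colm x)"
    unfolding colm_mult[OF Uc assms(2), symmetric] using Uc xc by (simp add: adj_mult[of _ n n _ 1])
  also have "\<dots> = adj (colm x) * (adj U * (U * colm x))"
    using Uc xc by (simp add: assoc_mult_mat[of _ 1 n _ n _ 1])
  also have "\<dots> = adj (colm x) * colm x" using WadjW_left(2)[OF assms(1) xc] by simp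
  finally have "complex_of_real (vnorm2 (U *\<^sub>v x)) = complex_of_real (vnorm2 x)"
    by (metis colm_norm)
  thus ?thesis by simp
qed

lemma contraction_mult_unitary: assumes "contraction n V" "unitary_mat n W"
  shows "contraction n (V * W)"
proof -
  have Vc: "V \<in> carrier_mat n n" and Wc: "W \<in> carrier_mat n n" using assms unitary_carrier unfolding contraction_def by auto
  show ?thesis unfolding contraction_def
  proof (intro conjI ballI)
    show "V * W \<in> carrier_mat n n" using Vc Wc by simp
    fix x :: "complex vec" assume x: "x \<in> carrier_vec n"
    have "(V * W) *\<^sub>v x = V *\<^sub>v (W *\<^sub>v x)" using Vc Wc x by simp
    moreover have "vnorm2 (V *\<^sub>v (W *\<^sub>v x)) \<le> vnorm2 (W *\<^sub>v x)"
      using assms(1) Wc x unfolding contraction_def by auto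
    moreover have "vnorm2 (W *\<^sub>v x) = vnorm2 x" using unitary_vnorm2[OF assms(2) x] .
    ultimately show "vnorm2 ((V * W) *\<^sub>v x) \<le> vnorm2 x" by simp
  qed
qed

definition uconj :: "nat \<Rightarrow> complex mat set \<Rightarrow> complex mat set \<Rightarrow> bool" where
  "uconj n A B \<longleftrightarrow> (\<exists>W. unitary_mat n W \<and> B = {adj W * Z * W | Z. Z \<in> A})"

lemma orbit_sub:
  assumes A: "unital_star_subalg n A" and B: "unital_star_subalg n B" and AB: "uconj n A B"
    and S: "S \<in> carrier_mat n n"
  shows "unitary_orbit n (cond_exp B ` unitary_orbit n {S}) \<subseteq> unitary_orbit n (cond_exp A ` unitary_orbit n {S})"
    "unitary_orbit n (cond_exp B ` compressions n S) \<subseteq> unitary_orbit n (cond_exp A ` compressions n S)"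
proof -
  obtain W where W: "unitary_mat n W" and BA: "B = {adj W * Z * W | Z. Z \<in> A}" using AB unfolding uconj_def by auto
  have Wc: "W \<in> carrier_mat n n" using W unitary_carrier by auto
  have key: "adj U * cond_exp B (adj V * S * V) * U \<in> unitary_orbit n (cond_exp A ` {adj V * S * V | V. P V})"
    if U: "unitary_mat n U" and Vc: "V \<in> carrier_mat n n" and PV: "P (V * adj W)" for U V P
  proof -
    have Uc: "U \<in> carrier_mat n n" using U unitary_carrier by auto
    have Xc: "adj V * S * V \<in> carrier_mat n n" using Vc S by simp
    have e: "cond_exp B (adj V * S * V) = adj W * cond_exp A (W * (adj V * S * V) * adj W) * W"
      by (rule cond_exp_conj[OF A B W BA Xc])
    have "W * (adj V * S * V) * adj W = adj (V * adj W) * S * (V * adj W)"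
      using Vc Wc S by (simp add: adj_mult[of _ n n _ n] assoc_mult_mat[of _ n n _ n _ n])
    hence X'in: "W * (adj V * S * V) * adj W \<in> {adj V * S * V | V. P V}" using PV by auto
    define E where "E = cond_exp A (W * (adj V * S * V) * adj W)"
    have Ec: "E \<in> carrier_mat n n" unfolding E_def
      using cond_exp_prop[OF A, of "W * (adj V * S * V) * adj W"] A Vc Wc S
      unfolding CE_prop_def unital_star_subalg_def by auto
    have "adj U * cond_exp B (adj V * S * V) * U = adj (W * U) * E * (W * U)"
      unfolding e E_def[symmetric] using Uc Wc Ec
      by (simp add: adj_mult[of _ n n _ n] assoc_mult_mat[of _ n n _ n _ n])
    moreover have "unitary_mat n (W * U)" using unitary_mult[OF W U] .
    ultimately show ?thesis unfolding unitary_orbit_def E_def using X'in by blast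
  qed
  have orb: "unitary_orbit n {S} = {adj V * S * V | V. unitary_mat n V}" unfolding unitary_orbit_def by auto
  show "unitary_orbit n (cond_exp B ` unitary_orbit n {S}) \<subseteq> unitary_orbit n (cond_exp A ` unitary_orbit n {S})"
  proof
    fix M assume "M \<in> unitary_orbit n (cond_exp B ` unitary_orbit n {S})"
    then obtain U V where UV: "unitary_mat n U" "unitary_mat n V" "M = adj U * cond_exp B (adj V * S * V) * U"
      unfolding unitary_orbit_def by auto
    show "M \<in> unitary_orbit n (cond_exp A ` unitary_orbit n {S})"
      unfolding UV(3) orb
      by (rule key[OF UV(1) unitary_carrier[OF UV(2)]]) (rule unitary_mult[OF UV(2) unitary_adj[OF W]])
  qed
  show "unitary_orbit n (cond_exp B ` compressions n S) \<subseteq> unitary_orbit n (cond_exp A ` compressions n S)"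
  proof
    fix M assume "M \<in> unitary_orbit n (cond_exp B ` compressions n S)"
    then obtain U V where UV: "unitary_mat n U" "contraction n V" "M = adj U * cond_exp B (adj V * S * V) * U"
      unfolding unitary_orbit_def compressions_def by auto
    have Vc: "V \<in> carrier_mat n n" using UV(2) unfolding contraction_def by auto
    show "M \<in> unitary_orbit n (cond_exp A ` compressions n S)"
      unfolding UV(3) compressions_def
      by (rule key[OF UV(1) Vc]) (rule contraction_mult_unitary[OF UV(2) unitary_adj[OF W]])
  qed
qed

lemma uconj_sym: assumes "uconj n A B" "A \<subseteq> carrier_mat n n" shows "uconj n B A"
proof -
  obtain W where W: "unitary_mat n W" and BA: "B = {adj W * Z * W | Z. Z \<in> A}" using assms unfolding uconj_def by auto
  have "A = {adj (adj W) * Z * adj W | Z. Z \<in> B}"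
  proof (rule equalityI; rule subsetI)
    fix X assume X: "X \<in> A"
    hence "X = adj (adj W) * (adj W * X * W) * adj W"
      using conj_back[OF unitary_adj[OF W], of X] assms(2) by auto
    thus "X \<in> {adj (adj W) * Z * adj W | Z. Z \<in> B}" using X BA by blast
  next
    fix X assume "X \<in> {adj (adj W) * Z * adj W | Z. Z \<in> B}"
    then obtain Z where Z: "Z \<in> A" "X = adj (adj W) * (adj W * Z * W) * adj W" using BA by auto
    thus "X \<in> A" using conj_back[OF unitary_adj[OF W], of Z] assms(2) by auto
  qed
  thus ?thesis unfolding uconj_def using unitary_adj[OF W] by blast
qed


lemma uconj_trans: assumes "uconj n A B" "uconj n B C" "A \<subseteq> carrier_mat n n" shows "uconj n A C"
proof -
  obtain W1 where W1: "unitary_mat n W1" and B: "B = {adj W1 * Z * W1 | Z. Z \<in> A}" using assms unfolding uconj_def by auto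
  obtain W2 where W2: "unitary_mat n W2" and C: "C = {adj W2 * Z * W2 | Z. Z \<in> B}" using assms unfolding uconj_def by auto
  have c: "W1 \<in> carrier_mat n n" "W2 \<in> carrier_mat n n" using W1 W2 unitary_carrier by auto
  have e: "adj W2 * (adj W1 * Z * W1) * W2 = adj (W1 * W2) * Z * (W1 * W2)" if "Z \<in> A" for Z
    using that assms(3) c by (auto simp: adj_mult[of _ n n _ n] assoc_mult_mat[of _ n n _ n _ n])
  have "C = (\<lambda>Z. adj W2 * Z * W2) ` ((\<lambda>Z. adj W1 * Z * W1) ` A)" unfolding C B Setcompr_eq_image ..
  also have "\<dots> = (\<lambda>Z. adj (W1 * W2) * Z * (W1 * W2)) ` A" unfolding image_comp
    by (rule image_cong[OF refl]) (simp add: e)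
  finally have "C = {adj (W1 * W2) * Z * (W1 * W2) | Z. Z \<in> A}" unfolding Setcompr_eq_image .
  thus ?thesis unfolding uconj_def using unitary_mult[OF W1 W2] by blast
qed

lemma uconj_refl: assumes "A \<subseteq> carrier_mat n n" shows "uconj n A A"
proof -
  have "unitary_mat n (1\<^sub>m n)" unfolding unitary_mat_def by simp
  moreover have "A = {adj (1\<^sub>m n) * Z * (1\<^sub>m n) | Z. Z \<in> A}"
    unfolding Setcompr_eq_image using assms by (auto intro!: image_cong[where f=id, simplified] simp: subset_iff)
  ultimately show ?thesis unfolding uconj_def by blast
qed

definition BD :: "complex mat set \<Rightarrow> complex mat set \<Rightarrow> complex mat set" where
  "BD P Q = {four_block_mat D1 (0\<^sub>m (dim_row D1) (dim_col D2)) (0\<^sub>m (dim_row D2) (dim_col D1)) D2 | D1 D2. D1 \<in> P \<and> D2 \<in> Q}"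

lemma BD_carrier: assumes "P \<subseteq> carrier_mat p p" "Q \<subseteq> carrier_mat q q"
  shows "BD P Q = {four_block_mat D1 (0\<^sub>m p q) (0\<^sub>m q p) D2 | D1 D2. D1 \<in> P \<and> D2 \<in> Q}"
proof -
  have e: "four_block_mat D1 (0\<^sub>m (dim_row D1) (dim_col D2)) (0\<^sub>m (dim_row D2) (dim_col D1)) D2
     = four_block_mat D1 (0\<^sub>m p q) (0\<^sub>m q p) D2" if "D1 \<in> P" "D2 \<in> Q" for D1 D2
  proof -
    have "D1 \<in> carrier_mat p p" "D2 \<in> carrier_mat q q" using assms that by auto
    thus ?thesis by (simp add: carrier_matD)
  qed
  show ?thesis unfolding BD_def
  proof (intro Collect_cong iffI)
    fix x assume "\<exists>D1 D2. x = four_block_mat D1 (0\<^sub>m (dim_row D1) (dim_col D2)) (0\<^sub>m (dim_row D2) (dim_col D1)) D2 \<and> D1 \<in> P \<and> D2 \<in> Q"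
    then obtain D1 D2 where "x = four_block_mat D1 (0\<^sub>m (dim_row D1) (dim_col D2)) (0\<^sub>m (dim_row D2) (dim_col D1)) D2" "D1 \<in> P" "D2 \<in> Q" by blast
    thus "\<exists>D1 D2. x = four_block_mat D1 (0\<^sub>m p q) (0\<^sub>m q p) D2 \<and> D1 \<in> P \<and> D2 \<in> Q" using e by metis
  next
    fix x assume "\<exists>D1 D2. x = four_block_mat D1 (0\<^sub>m p q) (0\<^sub>m q p) D2 \<and> D1 \<in> P \<and> D2 \<in> Q"
    then obtain D1 D2 where "x = four_block_mat D1 (0\<^sub>m p q) (0\<^sub>m q p) D2" "D1 \<in> P" "D2 \<in> Q" by blast
    thus "\<exists>D1 D2. x = four_block_mat D1 (0\<^sub>m (dim_row D1) (dim_col D2)) (0\<^sub>m (dim_row D2) (dim_col D1)) D2 \<and> D1 \<in> P \<and> D2 \<in> Q" using e by metis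
  qed
qed

lemma BD_sub: assumes "P \<subseteq> carrier_mat p p" "Q \<subseteq> carrier_mat q q"
  shows "BD P Q \<subseteq> carrier_mat (p+q) (p+q)"
  unfolding BD_carrier[OF assms] using assms by (auto intro!: four_block_carrier_mat simp: subset_iff)

definition gen :: "(nat \<times> nat) list \<Rightarrow> complex mat list \<Rightarrow> complex mat" where
  "gen L Xs = diag_block_mat (concat (map (\<lambda>(X,(d,c)). replicate c X) (zip Xs L)))"
definition okX :: "(nat \<times> nat) list \<Rightarrow> complex mat list \<Rightarrow> bool" where
  "okX L Xs \<longleftrightarrow> length Xs = length L \<and> (\<forall>i<length L. Xs ! i \<in> carrier_mat (fst (L ! i)) (fst (L ! i)))"

lemma std_alg_gen: "std_alg L = {gen L Xs | Xs. okX L Xs}"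
  unfolding std_alg_def gen_def okX_def by simp

definition sz :: "(nat \<times> nat) list \<Rightarrow> nat" where
  "sz L = (\<Sum>(d,c)\<leftarrow>L. d * c)"

lemma sz_append[simp]: "sz (L1 @ L2) = sz L1 + sz L2" unfolding sz_def by simp

lemma gen_append: "length Xs1 = length L1 \<Longrightarrow> gen (L1 @ L2) (Xs1 @ Xs2) =
  (let A = gen L1 Xs1; B = gen L2 Xs2
  in four_block_mat A (0\<^sub>m (dim_row A) (dim_col B)) (0\<^sub>m (dim_row B) (dim_col A)) B)"
  unfolding gen_def by (simp add: diag_block_mat_append)

lemma okX_append: "okX (L1 @ L2) Xs \<longleftrightarrow> okX L1 (take (length L1) Xs) \<and> okX L2 (drop (length L1) Xs) \<and> length Xs = length L1 + length L2"
proof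
  assume ok: "okX (L1 @ L2) Xs"
  hence len: "length Xs = length L1 + length L2" unfolding okX_def by auto
  have c: "Xs ! i \<in> carrier_mat (fst ((L1 @ L2) ! i)) (fst ((L1 @ L2) ! i))" if "i < length L1 + length L2" for i
    using ok that unfolding okX_def by auto
  have 1: "okX L1 (take (length L1) Xs)" unfolding okX_def
  proof (intro conjI allI impI)
    fix i assume "i < length L1"
    thus "take (length L1) Xs ! i \<in> carrier_mat (fst (L1 ! i)) (fst (L1 ! i))"
      using c[of i] by (simp add: nth_append)
  qed (use len in simp)
  have 2: "okX L2 (drop (length L1) Xs)" unfolding okX_def
  proof (intro conjI allI impI)
    fix i assume "i < length L2"
    thus "drop (length L1) Xs ! i \<in> carrier_mat (fst (L2 ! i)) (fst (L2 ! i))"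
      using c[of "length L1 + i"] len by (simp add: nth_append)
  qed (use len in simp)
  show "okX L1 (take (length L1) Xs) \<and> okX L2 (drop (length L1) Xs) \<and> length Xs = length L1 + length L2"
    using 1 2 len by simp
next
  assume h: "okX L1 (take (length L1) Xs) \<and> okX L2 (drop (length L1) Xs) \<and> length Xs = length L1 + length L2"
  show "okX (L1 @ L2) Xs" unfolding okX_def
  proof (intro conjI allI impI)
    show "length Xs = length (L1 @ L2)" using h by simp
    fix i assume i: "i < length (L1 @ L2)"
    show "Xs ! i \<in> carrier_mat (fst ((L1 @ L2) ! i)) (fst ((L1 @ L2) ! i))"
    proof (cases "i < length L1")
      case True
      thus ?thesis using h unfolding okX_def by (auto simp: nth_append)
    next
      case False
      then obtain j where j: "i = length L1 + j" "j < length L2" using i by (metis add_diff_inverse_nat length_append nat_add_left_cancel_less)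
      have "drop (length L1) Xs ! j \<in> carrier_mat (fst (L2 ! j)) (fst (L2 ! j))" using h j unfolding okX_def by auto
      thus ?thesis using j h by (simp add: nth_append)
    qed
  qed
qed

lemma gen_dim: "okX L Xs \<Longrightarrow> gen L Xs \<in> carrier_mat (sz L) (sz L)"
proof (induction L arbitrary: Xs)
  case Nil
  then show ?case unfolding gen_def sz_def by auto
next
  case (Cons a L)
  obtain d c where a: "a = (d,c)" by force
  from Cons.prems obtain X Xs' where Xs: "Xs = X # Xs'" unfolding okX_def by (cases Xs) auto
  have X: "X \<in> carrier_mat d d" using Cons.prems unfolding Xs a okX_def by auto
  have ok': "okX L Xs'" using Cons.prems unfolding Xs okX_def by auto
  have "gen (a # L) Xs = diag_block_mat (replicate c X @ concat (map (\<lambda>(X,(d,c)). replicate c X) (zip Xs' L)))"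
    unfolding gen_def Xs a by simp
  moreover have "dim_row (diag_block_mat (replicate c X)) = d * c" "dim_col (diag_block_mat (replicate c X)) = d * c"
    using X by (auto simp: dim_diag_block_mat sum_list_replicate)
  ultimately show ?case using Cons.IH[OF ok'] unfolding a
    by (auto simp: diag_block_mat_append Let_def sz_def gen_def)
qed

lemma std_dim: "std_alg L \<subseteq> carrier_mat (sz L) (sz L)"
  unfolding std_alg_gen using gen_dim by auto

lemma std_append: "std_alg (L1 @ L2) = BD (std_alg L1) (std_alg L2)"
proof (rule equalityI; rule subsetI)
  fix M assume "M \<in> std_alg (L1 @ L2)"
  then obtain Xs where ok: "okX (L1 @ L2) Xs" and M: "M = gen (L1 @ L2) Xs" unfolding std_alg_gen by auto
  define Xs1 where "Xs1 = take (length L1) Xs"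
  define Xs2 where "Xs2 = drop (length L1) Xs"
  have ok12: "okX L1 Xs1" "okX L2 Xs2" "Xs = Xs1 @ Xs2" "length Xs1 = length L1"
    using ok unfolding okX_append Xs1_def Xs2_def by auto
  have "M = (let A = gen L1 Xs1; B = gen L2 Xs2
    in four_block_mat A (0\<^sub>m (dim_row A) (dim_col B)) (0\<^sub>m (dim_row B) (dim_col A)) B)"
    unfolding M ok12(3) using gen_append[OF ok12(4)] .
  thus "M \<in> BD (std_alg L1) (std_alg L2)" unfolding BD_def std_alg_gen Let_def using ok12 by blast
next
  fix M assume "M \<in> BD (std_alg L1) (std_alg L2)"
  then obtain Xs1 Xs2 where ok: "okX L1 Xs1" "okX L2 Xs2" and
    M: "M = (let A = gen L1 Xs1; B = gen L2 Xs2
    in four_block_mat A (0\<^sub>m (dim_row A) (dim_col B)) (0\<^sub>m (dim_row B) (dim_col A)) B)"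
    unfolding BD_def std_alg_gen Let_def by auto
  have l: "length Xs1 = length L1" using ok unfolding okX_def by auto
  have "okX (L1 @ L2) (Xs1 @ Xs2)" unfolding okX_append using ok l by (auto simp: okX_def)
  moreover have "M = gen (L1 @ L2) (Xs1 @ Xs2)" unfolding M gen_append[OF l] ..
  ultimately show "M \<in> std_alg (L1 @ L2)" unfolding std_alg_gen by blast
qed


lemma adj_fb: assumes "A \<in> carrier_mat a b" "D \<in> carrier_mat c d" "B \<in> carrier_mat a d" "C \<in> carrier_mat c b"
  shows "adj (four_block_mat A B C D) = four_block_mat (adj A) (adj C) (adj B) (adj D)"
  by (rule eq_matI) (use assms in auto)

lemma adj_zero[simp]: "adj (0\<^sub>m a b) = 0\<^sub>m b a"
  by (rule eq_matI) auto

lemma fb_conj: assumes W: "W1 \<in> carrier_mat p p" "W2 \<in> carrier_mat q q" and D: "D1 \<in> carrier_mat p p" "D2 \<in> carrier_mat q q"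
  shows "adj (four_block_mat W1 (0\<^sub>m p q) (0\<^sub>m q p) W2) * four_block_mat D1 (0\<^sub>m p q) (0\<^sub>m q p) D2 * four_block_mat W1 (0\<^sub>m p q) (0\<^sub>m q p) W2
    = four_block_mat (adj W1 * D1 * W1) (0\<^sub>m p q) (0\<^sub>m q p) (adj W2 * D2 * W2)"
proof -
  have a: "adj (four_block_mat W1 (0\<^sub>m p q) (0\<^sub>m q p) W2) = four_block_mat (adj W1) (0\<^sub>m p q) (0\<^sub>m q p) (adj W2)"
    using W by (simp add: adj_fb)
  have "four_block_mat (adj W1) (0\<^sub>m p q) (0\<^sub>m q p) (adj W2) * four_block_mat D1 (0\<^sub>m p q) (0\<^sub>m q p) D2
     = four_block_mat (adj W1 * D1) (0\<^sub>m p q) (0\<^sub>m q p) (adj W2 * D2)"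
    using W D by (simp add: mult_four_block_mat[of _ p p _ q _ q _ _ p _ q] carrier_matD)
  moreover have "four_block_mat (adj W1 * D1) (0\<^sub>m p q) (0\<^sub>m q p) (adj W2 * D2) * four_block_mat W1 (0\<^sub>m p q) (0\<^sub>m q p) W2
     = four_block_mat (adj W1 * D1 * W1) (0\<^sub>m p q) (0\<^sub>m q p) (adj W2 * D2 * W2)"
    using W D by (simp add: mult_four_block_mat[of _ p p _ q _ q _ _ p _ q] carrier_matD)
  ultimately show ?thesis unfolding a by simp
qed

lemma fb_unitary: assumes "unitary_mat p W1" "unitary_mat q W2"
  shows "unitary_mat (p+q) (four_block_mat W1 (0\<^sub>m p q) (0\<^sub>m q p) W2)"
proof -
  have W: "W1 \<in> carrier_mat p p" "W2 \<in> carrier_mat q q" using assms unitary_carrier by auto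
  have a: "adj (four_block_mat W1 (0\<^sub>m p q) (0\<^sub>m q p) W2) = four_block_mat (adj W1) (0\<^sub>m p q) (0\<^sub>m q p) (adj W2)"
    using W by (simp add: adj_fb)
  have z: "adj W1 * 0\<^sub>m p q = 0\<^sub>m p q" "0\<^sub>m p q * W2 = 0\<^sub>m p q" "0\<^sub>m q p * W1 = 0\<^sub>m q p" "adj W2 * 0\<^sub>m q p = 0\<^sub>m q p"
    "W1 * 0\<^sub>m p q = 0\<^sub>m p q" "0\<^sub>m p q * adj W2 = 0\<^sub>m p q" "0\<^sub>m q p * adj W1 = 0\<^sub>m q p" "W2 * 0\<^sub>m q p = 0\<^sub>m q p"
    using W by (auto intro: right_mult_zero_mat left_mult_zero_mat)
  have 1: "four_block_mat (adj W1) (0\<^sub>m p q) (0\<^sub>m q p) (adj W2) * four_block_mat W1 (0\<^sub>m p q) (0\<^sub>m q p) W2 = 1\<^sub>m (p+q)"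
    using W assms unfolding unitary_mat_def by (simp add: mult_four_block_mat[of _ p p _ q _ q _ _ p _ q] z)
  have 2: "four_block_mat W1 (0\<^sub>m p q) (0\<^sub>m q p) W2 * four_block_mat (adj W1) (0\<^sub>m p q) (0\<^sub>m q p) (adj W2) = 1\<^sub>m (p+q)"
    using W assms unfolding unitary_mat_def by (simp add: mult_four_block_mat[of _ p p _ q _ q _ _ p _ q] z)
  show ?thesis unfolding unitary_mat_def a using 1 2 W by auto
qed

lemma uconj_BD_cong: assumes "uconj p P P'" "uconj q Q Q'" "P \<subseteq> carrier_mat p p" "Q \<subseteq> carrier_mat q q"
  shows "uconj (p+q) (BD P Q) (BD P' Q')"
proof -
  obtain W1 where W1: "unitary_mat p W1" and P': "P' = {adj W1 * Z * W1 | Z. Z \<in> P}" using assms unfolding uconj_def by auto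
  obtain W2 where W2: "unitary_mat q W2" and Q': "Q' = {adj W2 * Z * W2 | Z. Z \<in> Q}" using assms unfolding uconj_def by auto
  have Wc: "W1 \<in> carrier_mat p p" "W2 \<in> carrier_mat q q" using W1 W2 unitary_carrier by auto
  have P'c: "P' \<subseteq> carrier_mat p p" unfolding P' using assms(3) Wc by auto
  have Q'c: "Q' \<subseteq> carrier_mat q q" unfolding Q' using assms(4) Wc by auto
  define W where "W = four_block_mat W1 (0\<^sub>m p q) (0\<^sub>m q p) W2"
  have "BD P' Q' = {adj W * Z * W | Z. Z \<in> BD P Q}"
    unfolding BD_carrier[OF P'c Q'c] BD_carrier[OF assms(3,4)] W_def
  proof (rule equalityI; rule subsetI)
    fix M assume "M \<in> {four_block_mat D1 (0\<^sub>m p q) (0\<^sub>m q p) D2 |D1 D2. D1 \<in> P' \<and> D2 \<in> Q'}"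
    then obtain Z1 Z2 where Z: "Z1 \<in> P" "Z2 \<in> Q" "M = four_block_mat (adj W1 * Z1 * W1) (0\<^sub>m p q) (0\<^sub>m q p) (adj W2 * Z2 * W2)"
      unfolding P' Q' by auto
    have "M = adj (four_block_mat W1 (0\<^sub>m p q) (0\<^sub>m q p) W2) * four_block_mat Z1 (0\<^sub>m p q) (0\<^sub>m q p) Z2 * four_block_mat W1 (0\<^sub>m p q) (0\<^sub>m q p) W2"
      unfolding Z(3) using fb_conj[OF Wc, of Z1 Z2] Z assms(3,4) by (simp add: subset_iff)
    thus "M \<in> {adj (four_block_mat W1 (0\<^sub>m p q) (0\<^sub>m q p) W2) * Z * four_block_mat W1 (0\<^sub>m p q) (0\<^sub>m q p) W2 |Z.
             Z \<in> {four_block_mat D1 (0\<^sub>m p q) (0\<^sub>m q p) D2 |D1 D2. D1 \<in> P \<and> D2 \<in> Q}}" using Z by blast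
  next
    fix M assume "M \<in> {adj (four_block_mat W1 (0\<^sub>m p q) (0\<^sub>m q p) W2) * Z * four_block_mat W1 (0\<^sub>m p q) (0\<^sub>m q p) W2 |Z.
             Z \<in> {four_block_mat D1 (0\<^sub>m p q) (0\<^sub>m q p) D2 |D1 D2. D1 \<in> P \<and> D2 \<in> Q}}"
    then obtain Z1 Z2 where Z: "Z1 \<in> P" "Z2 \<in> Q" "M = adj (four_block_mat W1 (0\<^sub>m p q) (0\<^sub>m q p) W2) * four_block_mat Z1 (0\<^sub>m p q) (0\<^sub>m q p) Z2 * four_block_mat W1 (0\<^sub>m p q) (0\<^sub>m q p) W2"
      by auto
    have "M = four_block_mat (adj W1 * Z1 * W1) (0\<^sub>m p q) (0\<^sub>m q p) (adj W2 * Z2 * W2)"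
      unfolding Z(3) using fb_conj[OF Wc, of Z1 Z2] Z assms(3,4) by (simp add: subset_iff)
    moreover have "adj W1 * Z1 * W1 \<in> P'" "adj W2 * Z2 * W2 \<in> Q'" unfolding P' Q' using Z by auto
    ultimately show "M \<in> {four_block_mat D1 (0\<^sub>m p q) (0\<^sub>m q p) D2 |D1 D2. D1 \<in> P' \<and> D2 \<in> Q'}" by blast
  qed
  moreover have "unitary_mat (p+q) W" unfolding W_def by (rule fb_unitary[OF W1 W2])
  ultimately show ?thesis unfolding uconj_def by blast
qed

lemma uconj_swap: assumes P: "P \<subseteq> carrier_mat p p" and Q: "Q \<subseteq> carrier_mat q q"
  shows "uconj (p+q) (BD P Q) (BD Q P)"
proof -
  define W :: "complex mat" where "W = four_block_mat (0\<^sub>m p q) (1\<^sub>m p) (1\<^sub>m q) (0\<^sub>m q p)"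
  define W' :: "complex mat" where "W' = four_block_mat (0\<^sub>m q p) (1\<^sub>m q) (1\<^sub>m p) (0\<^sub>m p q)"
  have a: "adj W = W'" unfolding W_def W'_def by (subst adj_fb[of _ p q _ q p]) auto
  have Wc: "W \<in> carrier_mat (p+q) (p+q)" unfolding W_def carrier_mat_def by auto
  have "W' * W = four_block_mat (0\<^sub>m q p * 0\<^sub>m p q + 1\<^sub>m q * 1\<^sub>m q) (0\<^sub>m q p * 1\<^sub>m p + 1\<^sub>m q * 0\<^sub>m q p)
      (1\<^sub>m p * 0\<^sub>m p q + 0\<^sub>m p q * 1\<^sub>m q) (1\<^sub>m p * 1\<^sub>m p + 0\<^sub>m p q * 0\<^sub>m q p)"
    unfolding W_def W'_def by (rule mult_four_block_mat[of _ q p _ q _ p _ _ q _ p]) auto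
  also have "\<dots> = four_block_mat (1\<^sub>m q) (0\<^sub>m q p) (0\<^sub>m p q) (1\<^sub>m p)" by simp
  also have "\<dots> = 1\<^sub>m (p+q)" by (simp add: add.commute)
  finally have 1: "W' * W = 1\<^sub>m (p+q)" .
  have "W * W' = four_block_mat (0\<^sub>m p q * 0\<^sub>m q p + 1\<^sub>m p * 1\<^sub>m p) (0\<^sub>m p q * 1\<^sub>m q + 1\<^sub>m p * 0\<^sub>m p q)
      (1\<^sub>m q * 0\<^sub>m q p + 0\<^sub>m q p * 1\<^sub>m p) (1\<^sub>m q * 1\<^sub>m q + 0\<^sub>m q p * 0\<^sub>m p q)"
    unfolding W_def W'_def by (rule mult_four_block_mat[of _ p q _ p _ q _ _ p _ q]) auto
  also have "\<dots> = 1\<^sub>m (p+q)" by simp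
  finally have 2: "W * W' = 1\<^sub>m (p+q)" .
  have U: "unitary_mat (p+q) W" unfolding unitary_mat_def a using 1 2 Wc by auto
  have conj: "adj W * four_block_mat D1 (0\<^sub>m p q) (0\<^sub>m q p) D2 * W = four_block_mat D2 (0\<^sub>m q p) (0\<^sub>m p q) D1"
    if D: "D1 \<in> carrier_mat p p" "D2 \<in> carrier_mat q q" for D1 D2
  proof -
    have "W' * four_block_mat D1 (0\<^sub>m p q) (0\<^sub>m q p) D2 = four_block_mat (0\<^sub>m q p * D1 + 1\<^sub>m q * 0\<^sub>m q p)
       (0\<^sub>m q p * 0\<^sub>m p q + 1\<^sub>m q * D2) (1\<^sub>m p * D1 + 0\<^sub>m p q * 0\<^sub>m q p) (1\<^sub>m p * 0\<^sub>m p q + 0\<^sub>m p q * D2)"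
      unfolding W'_def by (rule mult_four_block_mat[of _ q p _ q _ p _ _ p _ q]) (use D in auto)
    also have "\<dots> = four_block_mat (0\<^sub>m q p) D2 D1 (0\<^sub>m p q)" using D by (simp add: carrier_matD)
    finally have e1: "W' * four_block_mat D1 (0\<^sub>m p q) (0\<^sub>m q p) D2 = four_block_mat (0\<^sub>m q p) D2 D1 (0\<^sub>m p q)" .
    have "four_block_mat (0\<^sub>m q p) D2 D1 (0\<^sub>m p q) * W = four_block_mat (0\<^sub>m q p * 0\<^sub>m p q + D2 * 1\<^sub>m q)
       (0\<^sub>m q p * 1\<^sub>m p + D2 * 0\<^sub>m q p) (D1 * 0\<^sub>m p q + 0\<^sub>m p q * 1\<^sub>m q) (D1 * 1\<^sub>m p + 0\<^sub>m p q * 0\<^sub>m q p)"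
      unfolding W_def by (rule mult_four_block_mat[of _ q p _ q _ p _ _ q _ p]) (use D in auto)
    also have "\<dots> = four_block_mat D2 (0\<^sub>m q p) (0\<^sub>m p q) D1" using D by (simp add: carrier_matD)
    finally show ?thesis unfolding a e1 .
  qed
  have "BD Q P = {adj W * Z * W | Z. Z \<in> BD P Q}"
    unfolding BD_carrier[OF P Q] BD_carrier[OF Q P]
  proof (rule equalityI; rule subsetI)
    fix M assume "M \<in> {four_block_mat D1 (0\<^sub>m q p) (0\<^sub>m p q) D2 |D1 D2. D1 \<in> Q \<and> D2 \<in> P}"
    then obtain D1 D2 where D: "D1 \<in> Q" "D2 \<in> P" "M = four_block_mat D1 (0\<^sub>m q p) (0\<^sub>m p q) D2" by auto
    have "M = adj W * four_block_mat D2 (0\<^sub>m p q) (0\<^sub>m q p) D1 * W" using conj[of D2 D1] D P Q by (auto simp: subset_iff)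
    thus "M \<in> {adj W * Z * W |Z. Z \<in> {four_block_mat D1 (0\<^sub>m p q) (0\<^sub>m q p) D2 |D1 D2. D1 \<in> P \<and> D2 \<in> Q}}"
      using D by blast
  next
    fix M assume "M \<in> {adj W * Z * W |Z. Z \<in> {four_block_mat D1 (0\<^sub>m p q) (0\<^sub>m q p) D2 |D1 D2. D1 \<in> P \<and> D2 \<in> Q}}"
    then obtain D1 D2 where D: "D1 \<in> P" "D2 \<in> Q" "M = adj W * four_block_mat D1 (0\<^sub>m p q) (0\<^sub>m q p) D2 * W" by auto
    have "M = four_block_mat D2 (0\<^sub>m q p) (0\<^sub>m p q) D1" using conj[of D1 D2] D P Q by (auto simp: subset_iff)
    thus "M \<in> {four_block_mat D1 (0\<^sub>m q p) (0\<^sub>m p q) D2 |D1 D2. D1 \<in> Q \<and> D2 \<in> P}" using D by blast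
  qed
  thus ?thesis unfolding uconj_def using U by blast
qed

lemma sz_mset: "mset L = mset L' \<Longrightarrow> sz L = sz L'"
  unfolding sz_def by (metis mset_map sum_mset_sum_list)

lemma std_perm: "mset L = mset L' \<Longrightarrow> uconj (sz L) (std_alg L) (std_alg L')"
proof (induction L arbitrary: L')
  case Nil
  then show ?case using uconj_refl[OF std_dim] by simp
next
  case (Cons a L1)
  have "a \<in> set L'" using Cons.prems by (metis list.set_intros(1) set_mset_mset)
  then obtain xs ys where L': "L' = xs @ a # ys" by (meson split_list)
  have m: "mset L1 = mset (xs @ ys)" using Cons.prems unfolding L' by simp
  note IH = Cons.IH[OF m]
  have szL1: "sz L1 = sz xs + sz ys" using sz_mset[OF m] by simp
  let ?S = std_alg
  have e1: "?S (a # L1) = BD (?S [a]) (?S L1)" using std_append[of "[a]" L1] by simp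
  have u2: "uconj (sz [a] + sz L1) (BD (?S [a]) (?S L1)) (BD (?S [a]) (?S (xs @ ys)))"
    by (rule uconj_BD_cong[OF uconj_refl[OF std_dim] IH std_dim std_dim])
  have e3: "BD (?S [a]) (?S (xs @ ys)) = BD (?S ([a] @ xs)) (?S ys)"
    using std_append[of "[a]" "xs @ ys"] std_append[of "[a] @ xs" ys] by simp
  have u4: "uconj (sz [a] + sz xs) (?S ([a] @ xs)) (?S (xs @ [a]))"
    unfolding std_append by (rule uconj_swap[OF std_dim std_dim])
  have u5: "uconj (sz ([a] @ xs) + sz ys) (BD (?S ([a] @ xs)) (?S ys)) (BD (?S (xs @ [a])) (?S ys))"
    by (rule uconj_BD_cong[OF _ uconj_refl[OF std_dim] std_dim std_dim]) (use u4 in \<open>simp add: sz_def\<close>)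
  have e6: "BD (?S (xs @ [a])) (?S ys) = ?S L'" unfolding L' using std_append[of "xs @ [a]" ys] by simp
  have d: "sz (a # L1) = sz [a] + sz L1" "sz ([a] @ xs) + sz ys = sz [a] + sz L1"
    using szL1 by (simp_all add: sz_def)
  have c: "BD (?S [a]) (?S L1) \<subseteq> carrier_mat (sz [a] + sz L1) (sz [a] + sz L1)"
    by (rule BD_sub[OF std_dim std_dim])
  have "uconj (sz [a] + sz L1) (BD (?S [a]) (?S L1)) (?S L')"
    using uconj_trans[OF u2 u5[unfolded d(2) e6, folded e3] c] .
  thus ?case unfolding e1 d(1) .
qed

theorem lemma3p7:
  fixes n :: nat and \<A> \<B> :: "complex mat set" and S :: "complex mat"
    and L L' :: "(nat \<times> nat) list"
  assumes "unital_star_subalg n \<A>" and "unital_star_subalg n \<B>"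
    and "spectral_list n \<A> L" and "spectral_list n \<B> L'" and "equiv_lists L L'"
    and "S \<in> carrier_mat n n"
  shows "unitary_orbit n (cond_exp \<A> ` unitary_orbit n {S})
           = unitary_orbit n (cond_exp \<B> ` unitary_orbit n {S})
       \<and> unitary_orbit n (cond_exp \<A> ` compressions n S)
           = unitary_orbit n (cond_exp \<B> ` compressions n S)"
proof -
  have Ac: "\<A> \<subseteq> carrier_mat n n" and Bc: "\<B> \<subseteq> carrier_mat n n"
    using assms(1,2) unfolding unital_star_subalg_def by auto
  have szL: "sz L = n" and szL': "sz L' = n" using assms(3,4) unfolding spectral_list_def sz_def by auto
  have u1: "uconj n \<A> (std_alg L)" using assms(3) unfolding spectral_list_def uconj_def by auto
  have u3': "uconj n \<B> (std_alg L')" using assms(4) unfolding spectral_list_def uconj_def by auto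
  have u3: "uconj n (std_alg L') \<B>" using uconj_sym[OF u3' Bc] .
  have u2: "uconj n (std_alg L) (std_alg L')" using std_perm[of L L'] assms(5) szL unfolding equiv_lists_def by simp
  have SLc: "std_alg L \<subseteq> carrier_mat n n" using std_dim[of L] szL by simp
  have AB: "uconj n \<A> \<B>" by (rule uconj_trans[OF u1 uconj_trans[OF u2 u3 SLc] Ac])
  have BA: "uconj n \<B> \<A>" by (rule uconj_sym[OF AB Ac])
  note s1 = orbit_sub[OF assms(1) assms(2) AB assms(6)]
  note s2 = orbit_sub[OF assms(2) assms(1) BA assms(6)]
  show ?thesis using s1 s2 by blast
qed

end
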